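(* Let $G=(V,E)$ be a finite simple connected graph of order $n\geq 2$. Then $\alpha_0(S(G))=n=\beta_0(S(G))$ if and only if $|N(S)|\geq |S|$ for every independent set $S$ of $G$.
   Context: For a finite simple graph $G=(V,E)$, the splitting graph $S(G)$ is obtained from $G$ by adding, for each vertex $v\in V$, a new vertex $v'$, and joining $v'$ to a vertex $u\in V$ if and only if $uv\in E$ (the new vertices are pairwise non-adjacent; the edges of $G$ are kept). For a graph $H$, $\alpha_0(H)$ denotes the vertex cover number (minimum size of a set of vertices meeting every edge) and $\beta_0(H)$ the independence number (maximum size of an independent set). For $S\subseteq V$, $N(S)$ is the set of vertices of $G$ adjacent to some vertex of $S$. *)

theory Defs
  imports Main
begin

definition simple_graph :: "'a set \<Rightarrow> ('a \<Rightarrow> 'a \<Rightarrow> bool) \<Rightarrow> bool" where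
  "simple_graph V E \<longleftrightarrow> finite V \<and> (\<forall>u v. E u v \<longrightarrow> u \<in> V \<and> v \<in> V)
     \<and> (\<forall>u v. E u v \<longrightarrow> E v u) \<and> (\<forall>u. \<not> E u u)"

definition connected_graph :: "'a set \<Rightarrow> ('a \<Rightarrow> 'a \<Rightarrow> bool) \<Rightarrow> bool" where
  "connected_graph V E \<longleftrightarrow> (\<forall>u\<in>V. \<forall>v\<in>V. E\<^sup>*\<^sup>* u v)"

definition vertex_cover :: "'a set \<Rightarrow> ('a \<Rightarrow> 'a \<Rightarrow> bool) \<Rightarrow> 'a set \<Rightarrow> bool" where
  "vertex_cover V E C \<longleftrightarrow> C \<subseteq> V \<and> (\<forall>u v. E u v \<longrightarrow> u \<in> C \<or> v \<in> C)"

definition independent_set :: "'a set \<Rightarrow> ('a \<Rightarrow> 'a \<Rightarrow> bool) \<Rightarrow> 'a set \<Rightarrow> bool" where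
  "independent_set V E S \<longleftrightarrow> S \<subseteq> V \<and> (\<forall>u\<in>S. \<forall>v\<in>S. \<not> E u v)"

definition vertex_cover_number :: "'a set \<Rightarrow> ('a \<Rightarrow> 'a \<Rightarrow> bool) \<Rightarrow> nat" where
  "vertex_cover_number V E = Min (card ` {C. vertex_cover V E C})"

definition independence_number :: "'a set \<Rightarrow> ('a \<Rightarrow> 'a \<Rightarrow> bool) \<Rightarrow> nat" where
  "independence_number V E = Max (card ` {S. independent_set V E S})"

definition nbhd :: "('a \<Rightarrow> 'a \<Rightarrow> bool) \<Rightarrow> 'a set \<Rightarrow> 'a set" where
  "nbhd E S = {u. \<exists>v\<in>S. E u v}"

text \<open>Splitting graph: original vertex v is Inl v, its new copy v' is Inr v.\<close>
definition split_V :: "'a set \<Rightarrow> ('a + 'a) set" where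
  "split_V V = Inl ` V \<union> Inr ` V"

fun split_E :: "('a \<Rightarrow> 'a \<Rightarrow> bool) \<Rightarrow> 'a + 'a \<Rightarrow> 'a + 'a \<Rightarrow> bool" where
  "split_E E (Inl u) (Inl v) = E u v"
| "split_E E (Inl u) (Inr v) = E u v"
| "split_E E (Inr u) (Inl v) = E u v"
| "split_E E (Inr u) (Inr v) = False"

end

theory Submission
  imports Defs
begin

lemma card_lr:
  assumes "finite A" "finite B"
  shows "card (Inl ` A \<union> Inr ` B :: ('a + 'a) set) = card A + card B"
proof -
  have "card (Inl ` A \<union> Inr ` B :: ('a + 'a) set) = card (Inl ` A :: ('a + 'a) set) + card (Inr ` B :: ('a + 'a) set)"
    using assms by (intro card_Un_disjoint) auto
  also have "\<dots> = card A + card B" by (simp add: card_image)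
  finally show ?thesis .
qed

lemma sv_card:
  assumes "finite V"
  shows "card (split_V V) = 2 * card V" "finite (split_V V)"
  using card_lr[OF assms assms] assms by (simp_all add: split_V_def)

lemma decomp:
  fixes I :: "('a + 'a) set"
  shows "I = Inl ` {a. Inl a \<in> I} \<union> Inr ` {b. Inr b \<in> I}"
proof
  show "I \<subseteq> Inl ` {a. Inl a \<in> I} \<union> Inr ` {b. Inr b \<in> I}"
  proof
    fix x assume "x \<in> I" then show "x \<in> Inl ` {a. Inl a \<in> I} \<union> Inr ` {b. Inr b \<in> I}"
      by (cases x) auto
  qed
qed auto

lemma edges_in:
  assumes "simple_graph V E" "split_E E x y"
  shows "x \<in> split_V V \<and> y \<in> split_V V"
  using assms by (cases x; cases y) (auto simp: simple_graph_def split_V_def)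

lemma vc_iff:
  assumes "simple_graph V E" "C \<subseteq> split_V V"
  shows "vertex_cover (split_V V) (split_E E) C \<longleftrightarrow>
         independent_set (split_V V) (split_E E) (split_V V - C)"
  using assms edges_in[OF assms(1)] unfolding vertex_cover_def independent_set_def
  by blast

lemma alpha_beta:
  assumes "simple_graph V E"
  shows "vertex_cover_number (split_V V) (split_E E) + independence_number (split_V V) (split_E E)
         = 2 * card V"
proof -
  let ?SV = "split_V V" and ?SE = "split_E E"
  have fin: "finite V" using assms by (simp add: simple_graph_def)
  note sv = sv_card[OF fin]
  let ?Cs = "card ` {C. vertex_cover ?SV ?SE C}" and ?Is = "card ` {S. independent_set ?SV ?SE S}"
  have fC: "finite ?Cs"
  proof -
    have "{C. vertex_cover ?SV ?SE C} \<subseteq> Pow ?SV" by (auto simp: vertex_cover_def)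
    then show ?thesis using sv(2) by (meson finite_Pow_iff finite_imageI finite_subset)
  qed
  have fI: "finite ?Is"
  proof -
    have "{C. independent_set ?SV ?SE C} \<subseteq> Pow ?SV" by (auto simp: independent_set_def)
    then show ?thesis using sv(2) by (meson finite_Pow_iff finite_imageI finite_subset)
  qed
  have "independent_set ?SV ?SE {}" by (simp add: independent_set_def)
  then have neI: "?Is \<noteq> {}" by auto
  have "vertex_cover ?SV ?SE ?SV" using edges_in[OF assms] by (auto simp: vertex_cover_def)
  then have neC: "?Cs \<noteq> {}" by auto
  obtain I where I: "independent_set ?SV ?SE I" "card I = Max ?Is"
    using Max_in[OF fI neI] by auto
  obtain C where C: "vertex_cover ?SV ?SE C" "card C = Min ?Cs"
    using Min_in[OF fC neC] by auto
  have IS: "I \<subseteq> ?SV" using I(1) by (simp add: independent_set_def)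
  have CS: "C \<subseteq> ?SV" using C(1) by (simp add: vertex_cover_def)
  have "vertex_cover ?SV ?SE (?SV - I)"
    using vc_iff[OF assms, of "?SV - I"] IS I(1) by (simp add: Diff_Diff_Int Int_absorb1)
  then have "Min ?Cs \<le> card (?SV - I)" using fC by auto
  also have "\<dots> = 2 * card V - Max ?Is" using IS sv by (simp add: card_Diff_subset finite_subset I(2))
  finally have 1: "Min ?Cs \<le> 2 * card V - Max ?Is" .
  have "independent_set ?SV ?SE (?SV - C)" using vc_iff[OF assms CS] C(1) by simp
  then have "card (?SV - C) \<le> Max ?Is" using fI by auto
  moreover have "card (?SV - C) = 2 * card V - Min ?Cs" using CS sv by (simp add: card_Diff_subset finite_subset C(2))
  ultimately have 2: "2 * card V - Min ?Cs \<le> Max ?Is" by simp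
  have "Max ?Is \<le> 2 * card V" using I IS sv by (metis card_mono)
  moreover have "Min ?Cs \<le> 2 * card V" using C CS sv by (metis card_mono)
  ultimately show ?thesis using 1 2 unfolding vertex_cover_number_def independence_number_def
    by linarith
qed

theorem corollary2:
  fixes V :: "'a set" and E :: "'a \<Rightarrow> 'a \<Rightarrow> bool"
  assumes "simple_graph V E" and "connected_graph V E" and "card V \<ge> 2"
  shows "(vertex_cover_number (split_V V) (split_E E) = card V
            \<and> independence_number (split_V V) (split_E E) = card V)
         \<longleftrightarrow> (\<forall>S. independent_set V E S \<longrightarrow> card (nbhd E S) \<ge> card S)"
proof -
  let ?SV = "split_V V" and ?SE = "split_E E"
  have fin: "finite V" using assms(1) by (simp add: simple_graph_def)
  have sym: "\<And>u v. E u v \<Longrightarrow> E v u" using assms(1) by (simp add: simple_graph_def)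
  have inV: "\<And>u v. E u v \<Longrightarrow> u \<in> V \<and> v \<in> V" using assms(1) by (simp add: simple_graph_def)
  have nbV: "\<And>S. nbhd E S \<subseteq> V" using inV by (auto simp: nbhd_def)
  note sv = sv_card[OF fin]
  let ?Is = "card ` {S. independent_set ?SV ?SE S}"
  have fI: "finite ?Is"
  proof -
    have "{C. independent_set ?SV ?SE C} \<subseteq> Pow ?SV" by (auto simp: independent_set_def)
    then show ?thesis using sv(2) by (meson finite_Pow_iff finite_imageI finite_subset)
  qed
  have indR: "independent_set ?SV ?SE (Inr ` V)"
    by (auto simp: independent_set_def split_V_def)
  have cardR: "card (Inr ` V :: ('a + 'a) set) = card V" by (simp add: card_image)
  have geN: "card V \<le> independence_number ?SV ?SE"
    unfolding independence_number_def using indR fI cardR by (metis Max_ge image_eqI mem_Collect_eq)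
  have ab: "vertex_cover_number ?SV ?SE + independence_number ?SV ?SE = 2 * card V"
    by (rule alpha_beta[OF assms(1)])
  have main: "independence_number ?SV ?SE = card V \<longleftrightarrow>
      (\<forall>S. independent_set V E S \<longrightarrow> card (nbhd E S) \<ge> card S)"
  proof
    assume eq: "independence_number ?SV ?SE = card V"
    show "\<forall>S. independent_set V E S \<longrightarrow> card (nbhd E S) \<ge> card S"
    proof (intro allI impI)
      fix S assume S: "independent_set V E S"
      have SV: "S \<subseteq> V" using S by (simp add: independent_set_def)
      let ?I = "Inl ` S \<union> Inr ` (V - nbhd E S)"
      have "independent_set ?SV ?SE ?I"
        using S SV unfolding independent_set_def split_V_def nbhd_def
        by (auto dest: sym) (meson sym)
      then have "card ?I \<le> card V" using eq Max_ge[OF fI, of "card ?I"] unfolding independence_number_def by auto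
      moreover have "card ?I = card S + (card V - card (nbhd E S))"
      proof -
        have fS: "finite S" using SV fin by (rule finite_subset)
        have fD: "finite (V - nbhd E S)" using fin by (rule finite_Diff)
        have fN: "finite (nbhd E S)" using nbV fin by (rule finite_subset)
        have "card (V - nbhd E S) = card V - card (nbhd E S)"
          using card_Diff_subset[OF fN nbV[of S]] .
        then show ?thesis using card_lr[OF fS fD] by simp
      qed
      moreover have "card (nbhd E S) \<le> card V" using nbV fin by (simp add: card_mono)
      ultimately show "card (nbhd E S) \<ge> card S" by linarith
    qed
  next
    assume H: "\<forall>S. independent_set V E S \<longrightarrow> card (nbhd E S) \<ge> card S"
    have "\<forall>k\<in>?Is. k \<le> card V"
    proof
      fix k assume "k \<in> ?Is"
      then obtain I where I: "independent_set ?SV ?SE I" "k = card I" by auto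
      define A where "A = {a. Inl a \<in> I}"
      define B where "B = {b. Inr b \<in> I}"
      have IS: "I \<subseteq> ?SV" using I by (simp add: independent_set_def)
      have AV: "A \<subseteq> V" using IS by (auto simp: A_def split_V_def)
      have BV: "B \<subseteq> V" using IS by (auto simp: B_def split_V_def)
      have Ieq: "I = Inl ` A \<union> Inr ` B" unfolding A_def B_def by (rule decomp)
      have indA: "independent_set V E A"
      proof -
        have "\<forall>x\<in>I. \<forall>y\<in>I. \<not> split_E E x y" using I(1) by (simp add: independent_set_def)
        then have "\<forall>u\<in>A. \<forall>v\<in>A. \<not> E u v" unfolding A_def by fastforce
        then show ?thesis using AV by (simp add: independent_set_def)
      qed
      have disj: "B \<inter> nbhd E A = {}"
      proof (rule ccontr)
        assume "B \<inter> nbhd E A \<noteq> {}"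
        then obtain b a where "b \<in> B" "a \<in> A" "E b a" by (auto simp: nbhd_def)
        then have "Inr b \<in> I" "Inl a \<in> I" "split_E E (Inr b) (Inl a)" by (simp_all add: A_def B_def)
        then show False using I(1) unfolding independent_set_def by blast
      qed
      have "B \<subseteq> V - nbhd E A" using BV disj by auto
      then have "card B \<le> card V - card (nbhd E A)"
      proof -
        have fN: "finite (nbhd E A)" using nbV fin by (rule finite_subset)
        have "card B \<le> card (V - nbhd E A)" using \<open>B \<subseteq> V - nbhd E A\<close> fin by (intro card_mono) auto
        also have "\<dots> = card V - card (nbhd E A)" using card_Diff_subset[OF fN nbV[of A]] .
        finally show ?thesis .
      qed
      moreover have "card I = card A + card B"
      proof -
        have fA: "finite A" using AV fin by (rule finite_subset)
        have fB: "finite B" using BV fin by (rule finite_subset)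
        show ?thesis using card_lr[OF fA fB] Ieq by simp
      qed
      moreover have "card A \<le> card (nbhd E A)" using H indA by auto
      moreover have "card (nbhd E A) \<le> card V" using nbV fin by (simp add: card_mono)
      ultimately show "k \<le> card V" using I(2) by linarith
    qed
    then have "independence_number ?SV ?SE \<le> card V"
    proof -
      have ne: "?Is \<noteq> {}" using indR by blast
      show ?thesis unfolding independence_number_def
        using Max_le_iff[OF fI ne] \<open>\<forall>k\<in>?Is. k \<le> card V\<close> by blast
    qed
    then show "independence_number ?SV ?SE = card V" using geN by simp
  qed
  have e: "independence_number ?SV ?SE = card V \<Longrightarrow> vertex_cover_number ?SV ?SE = card V"
    using ab by linarith
  show ?thesis
  proof
    assume "vertex_cover_number ?SV ?SE = card V \<and> independence_number ?SV ?SE = card V"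
    then show "\<forall>S. independent_set V E S \<longrightarrow> card (nbhd E S) \<ge> card S" using main by (elim conjE) (erule iffD1)
  next
    assume "\<forall>S. independent_set V E S \<longrightarrow> card (nbhd E S) \<ge> card S"
    then have "independence_number ?SV ?SE = card V" using main by (rule iffD2[rotated])
    then show "vertex_cover_number ?SV ?SE = card V \<and> independence_number ?SV ?SE = card V"
      using e by simp
  qed
qed

end
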